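(* Let $R$ be an associative ring with identity. Then $R$ is NJ-symmetric in each of the following cases: (1) $R$ is left quasi-duo, or $R$ is right quasi-duo; (2) $R$ is abelian and J-clean; (3) $R$ is abelian and J-quasipolar; (4) $R$ is generalized weakly symmetric (GWS) and $x^2=0$ for every nilpotent $x\in R$ (i.e. the index of nilpotency of nilpotent elements is at most 2).
   Context: $N(R)$ denotes the set of nilpotent elements and $J(R)$ the Jacobson radical of $R$. $R$ is NJ-symmetric if for all $a,b,c\in R$, $abc\in N(R)$ implies $bac\in J(R)$. $R$ is left (right) quasi-duo if every maximal left (right) ideal of $R$ is a two-sided ideal. $R$ is abelian if every idempotent of $R$ is central. $R$ is J-clean if every $a\in R$ can be written $a=e+j$ with $e^2=e$ and $j\in J(R)$. For $a\in R$, $\mathrm{comm}(a)=\{y\in R: ya=ay\}$ and $\mathrm{comm}^2(a)=\{x\in R: xy=yx \text{ for all } y\in \mathrm{comm}(a)\}$; $R$ is J-quasipolar if for every $a\in R$ there is $f=f^2\in\mathrm{comm}^2(a)$ with $a+f\in J(R)$. $R$ is GWS if for all $a,b,c\in R$, $abc=0$ implies $bac\in N(R)$. *)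

theory Defs
  imports Main
begin

text \<open>Rings are modelled by the type class ring_1 (associative ring with identity);
the ring R is the whole type.\<close>

definition nilpotent :: "'a::ring_1 \<Rightarrow> bool" where
  "nilpotent x \<longleftrightarrow> (\<exists>n::nat. x ^ n = 0)"

definition left_ideal :: "'a::ring_1 set \<Rightarrow> bool" where
  "left_ideal I \<longleftrightarrow> 0 \<in> I \<and> (\<forall>x\<in>I. \<forall>y\<in>I. x - y \<in> I) \<and> (\<forall>r. \<forall>x\<in>I. r * x \<in> I)"

definition right_ideal :: "'a::ring_1 set \<Rightarrow> bool" where
  "right_ideal I \<longleftrightarrow> 0 \<in> I \<and> (\<forall>x\<in>I. \<forall>y\<in>I. x - y \<in> I) \<and> (\<forall>r. \<forall>x\<in>I. x * r \<in> I)"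

definition maximal_left_ideal :: "'a::ring_1 set \<Rightarrow> bool" where
  "maximal_left_ideal I \<longleftrightarrow> left_ideal I \<and> I \<noteq> UNIV \<and>
     (\<forall>K. left_ideal K \<and> I \<subseteq> K \<and> K \<noteq> UNIV \<longrightarrow> K = I)"

definition maximal_right_ideal :: "'a::ring_1 set \<Rightarrow> bool" where
  "maximal_right_ideal I \<longleftrightarrow> right_ideal I \<and> I \<noteq> UNIV \<and>
     (\<forall>K. right_ideal K \<and> I \<subseteq> K \<and> K \<noteq> UNIV \<longrightarrow> K = I)"

definition jacobson :: "'a::ring_1 set" where
  "jacobson = \<Inter> {I. maximal_left_ideal I}"

definition NJ_symmetric :: "'a::ring_1 itself \<Rightarrow> bool" where
  "NJ_symmetric _ \<longleftrightarrow> (\<forall>a b c :: 'a. nilpotent (a * b * c) \<longrightarrow> b * a * c \<in> jacobson)"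

definition left_quasi_duo :: "'a::ring_1 itself \<Rightarrow> bool" where
  "left_quasi_duo _ \<longleftrightarrow> (\<forall>I :: 'a set. maximal_left_ideal I \<longrightarrow> right_ideal I)"

definition right_quasi_duo :: "'a::ring_1 itself \<Rightarrow> bool" where
  "right_quasi_duo _ \<longleftrightarrow> (\<forall>I :: 'a set. maximal_right_ideal I \<longrightarrow> left_ideal I)"

definition abelian_ring :: "'a::ring_1 itself \<Rightarrow> bool" where
  "abelian_ring _ \<longleftrightarrow> (\<forall>e :: 'a. e * e = e \<longrightarrow> (\<forall>x. e * x = x * e))"

definition J_clean :: "'a::ring_1 itself \<Rightarrow> bool" where
  "J_clean _ \<longleftrightarrow> (\<forall>a :: 'a. \<exists>e j. e * e = e \<and> j \<in> jacobson \<and> a = e + j)"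

definition comm :: "'a::ring_1 \<Rightarrow> 'a set" where
  "comm a = {y. y * a = a * y}"

definition comm2 :: "'a::ring_1 \<Rightarrow> 'a set" where
  "comm2 a = {x. \<forall>y\<in>comm a. x * y = y * x}"

definition J_quasipolar :: "'a::ring_1 itself \<Rightarrow> bool" where
  "J_quasipolar _ \<longleftrightarrow> (\<forall>a :: 'a. \<exists>f. f * f = f \<and> f \<in> comm2 a \<and> a + f \<in> jacobson)"

definition GWS :: "'a::ring_1 itself \<Rightarrow> bool" where
  "GWS _ \<longleftrightarrow> (\<forall>a b c :: 'a. a * b * c = 0 \<longrightarrow> nilpotent (b * a * c))"

end

theory Submission
  imports Defs
begin

definition gid :: "('a::ring_1 \<Rightarrow> 'a \<Rightarrow> 'a) \<Rightarrow> 'a set \<Rightarrow> bool" where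
  "gid m K \<longleftrightarrow> 0 \<in> K \<and> (\<forall>x\<in>K. \<forall>y\<in>K. x - y \<in> K) \<and> (\<forall>r. \<forall>x\<in>K. m r x \<in> K)"

lemma zorn_gen:
  fixes m :: "'a::ring_1 \<Rightarrow> 'a \<Rightarrow> 'a"
  assumes m1: "\<forall>r. m r 1 = r" and I: "gid m I" and nI: "(1::'a) \<notin> I"
  shows "\<exists>M. I \<subseteq> M \<and> gid m M \<and> M \<noteq> UNIV \<and> (\<forall>K. gid m K \<and> M \<subseteq> K \<and> K \<noteq> UNIV \<longrightarrow> K = M)"
proof -
  define A where "A = {K. gid m K \<and> I \<subseteq> K \<and> (1::'a) \<notin> K}"
  have "\<forall>C\<in>chains A. \<exists>U\<in>A. \<forall>X\<in>C. X \<subseteq> U"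
  proof
    fix C assume C: "C \<in> chains A"
    hence CA: "C \<subseteq> A" and ch: "\<forall>X\<in>C. \<forall>Y\<in>C. X \<subseteq> Y \<or> Y \<subseteq> X"
      unfolding chains_def chain_subset_def by auto
    show "\<exists>U\<in>A. \<forall>X\<in>C. X \<subseteq> U"
    proof (cases "C = {}")
      case True
      then show ?thesis using I nI unfolding A_def by auto
    next
      case False
      then obtain X0 where X0: "X0 \<in> C" by auto
      have "gid m (\<Union>C)" unfolding gid_def
      proof (intro conjI ballI allI)
        show "0 \<in> \<Union>C" using X0 CA unfolding A_def gid_def by auto
      next
        fix x y assume "x \<in> \<Union>C" "y \<in> \<Union>C"
        then obtain X Y where XY: "X \<in> C" "Y \<in> C" "x \<in> X" "y \<in> Y" by auto
        show "x - y \<in> \<Union>C"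
        proof (cases "X \<subseteq> Y")
          case True
          then show ?thesis using XY CA unfolding A_def gid_def by blast
        next
          case False
          hence "Y \<subseteq> X" using ch XY by blast
          then show ?thesis using XY CA unfolding A_def gid_def by blast
        qed
      next
        fix r x assume "x \<in> \<Union>C"
        then show "m r x \<in> \<Union>C" using CA unfolding A_def gid_def by blast
      qed
      moreover have "I \<subseteq> \<Union>C" using X0 CA unfolding A_def by auto
      moreover have "1 \<notin> \<Union>C" using CA unfolding A_def by auto
      ultimately show ?thesis unfolding A_def by blast
    qed
  qed
  from Zorn_Lemma2[OF this] obtain M where M: "M \<in> A" and mx: "\<forall>X\<in>A. M \<subseteq> X \<longrightarrow> X = M" by blast
  have "\<forall>K. gid m K \<and> M \<subseteq> K \<and> K \<noteq> UNIV \<longrightarrow> K = M"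
  proof (intro allI impI)
    fix K assume K: "gid m K \<and> M \<subseteq> K \<and> K \<noteq> UNIV"
    have "1 \<notin> K"
    proof
      assume "1 \<in> K"
      hence "\<forall>r. r \<in> K" using K m1 unfolding gid_def by metis
      thus False using K by auto
    qed
    thus "K = M" using K M mx unfolding A_def by auto
  qed
  thus ?thesis using M unfolding A_def by auto
qed

lemma gid_left: "left_ideal K = gid (\<lambda>r x. r * x) K"
  unfolding left_ideal_def gid_def by simp
lemma gid_right: "right_ideal K = gid (\<lambda>r x. x * r) K"
  unfolding right_ideal_def gid_def by simp

lemma zorn_left:
  assumes "left_ideal (I::'a::ring_1 set)" "1 \<notin> I"
  shows "\<exists>M. I \<subseteq> M \<and> maximal_left_ideal M"
  using zorn_gen[of "\<lambda>r x. r * x" I] assms unfolding maximal_left_ideal_def gid_left by auto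

lemma zorn_right:
  assumes "right_ideal (I::'a::ring_1 set)" "1 \<notin> I"
  shows "\<exists>M. I \<subseteq> M \<and> maximal_right_ideal M"
  using zorn_gen[of "\<lambda>r x. x * r" I] assms unfolding maximal_right_ideal_def gid_right by auto


lemma jac_zero: "0 \<in> jacobson"
  unfolding jacobson_def maximal_left_ideal_def left_ideal_def by auto
lemma jac_diff: "x \<in> jacobson \<Longrightarrow> y \<in> jacobson \<Longrightarrow> x - y \<in> jacobson"
  unfolding jacobson_def maximal_left_ideal_def left_ideal_def by auto
lemma jac_lmult: "x \<in> jacobson \<Longrightarrow> r * x \<in> jacobson"
  unfolding jacobson_def maximal_left_ideal_def left_ideal_def by auto
lemma jac_uminus: "x \<in> jacobson \<Longrightarrow> - x \<in> jacobson"
  using jac_diff[OF jac_zero, of x] by simp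
lemma jac_add: "x \<in> jacobson \<Longrightarrow> y \<in> jacobson \<Longrightarrow> x + y \<in> jacobson"
  using jac_diff[of x "- y"] jac_uminus[of y] by simp

lemma maxl_lid: "maximal_left_ideal M \<Longrightarrow> left_ideal M"
  unfolding maximal_left_ideal_def by blast
lemma maxr_rid: "maximal_right_ideal M \<Longrightarrow> right_ideal M"
  unfolding maximal_right_ideal_def by blast

lemma maxl_one: "maximal_left_ideal M \<Longrightarrow> (1::'a::ring_1) \<notin> M"
proof
  assume M: "maximal_left_ideal M" and "1 \<in> M"
  moreover have "left_ideal M" using M unfolding maximal_left_ideal_def by blast
  ultimately have "\<forall>y::'a. y * 1 \<in> M" unfolding left_ideal_def by blast
  thus False using M unfolding maximal_left_ideal_def by auto
qed

lemma maxr_one: "maximal_right_ideal M \<Longrightarrow> (1::'a::ring_1) \<notin> M"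
proof
  assume M: "maximal_right_ideal M" and "1 \<in> M"
  moreover have "right_ideal M" using M unfolding maximal_right_ideal_def by blast
  ultimately have "\<forall>y::'a. 1 * y \<in> M" unfolding right_ideal_def by blast
  thus False using M unfolding maximal_right_ideal_def by auto
qed

lemma maxl_ext:
  assumes M: "maximal_left_ideal M" and x: "(x::'a::ring_1) \<notin> M"
  shows "\<exists>m\<in>M. \<exists>r. 1 = m + r * x"
proof -
  define K where "K = {y. \<exists>m\<in>M. \<exists>r. y = m + r * x}"
  have lM: "left_ideal M" using M unfolding maximal_left_ideal_def by auto
  have "left_ideal K" unfolding left_ideal_def K_def
  proof (intro conjI ballI allI)
    show "(0::'a) \<in> {y. \<exists>m\<in>M. \<exists>r. y = m + r * x}" 
    proof -
      have "(0::'a) = 0 + 0 * x" by simp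
      moreover have "0 \<in> M" using lM unfolding left_ideal_def by blast
      ultimately show ?thesis by blast
    qed
  next
    fix a b assume "a \<in> {y. \<exists>m\<in>M. \<exists>r. y = m + r * x}" "b \<in> {y. \<exists>m\<in>M. \<exists>r. y = m + r * x}"
    then obtain m1 r1 m2 r2 where "m1 \<in> M" "m2 \<in> M" "a = m1 + r1 * x" "b = m2 + r2 * x" by auto
    thus "a - b \<in> {y. \<exists>m\<in>M. \<exists>r. y = m + r * x}" using lM unfolding left_ideal_def
      by (intro CollectI bexI[of _ "m1 - m2"] exI[of _ "r1 - r2"]) (auto simp: algebra_simps)
  next
    fix s a assume "a \<in> {y. \<exists>m\<in>M. \<exists>r. y = m + r * x}"
    then obtain m1 r1 where "m1 \<in> M" "a = m1 + r1 * x" by auto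
    thus "s * a \<in> {y. \<exists>m\<in>M. \<exists>r. y = m + r * x}" using lM unfolding left_ideal_def
      by (intro CollectI bexI[of _ "s * m1"] exI[of _ "s * r1"]) (auto simp: algebra_simps)
  qed
  moreover have "M \<subseteq> K" unfolding K_def
  proof
    fix y assume "y \<in> M"
    moreover have "y = y + 0 * x" by simp
    ultimately show "y \<in> {y. \<exists>m\<in>M. \<exists>r. y = m + r * x}" by blast
  qed
  moreover have "x \<in> K" unfolding K_def using lM unfolding left_ideal_def
    by (auto intro!: bexI[of _ 0] exI[of _ 1])
  ultimately have "K = UNIV" using M x unfolding maximal_left_ideal_def by blast
  hence "1 \<in> K" by auto
  thus ?thesis unfolding K_def by auto
qed

lemma maxr_ext:
  assumes M: "maximal_right_ideal M" and x: "(x::'a::ring_1) \<notin> M"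
  shows "\<exists>m\<in>M. \<exists>r. 1 = m + x * r"
proof -
  define K where "K = {y. \<exists>m\<in>M. \<exists>r. y = m + x * r}"
  have lM: "right_ideal M" using M unfolding maximal_right_ideal_def by auto
  have "right_ideal K" unfolding right_ideal_def K_def
  proof (intro conjI ballI allI)
    show "(0::'a) \<in> {y. \<exists>m\<in>M. \<exists>r. y = m + x * r}" 
    proof -
      have "(0::'a) = 0 + x * 0" by simp
      moreover have "0 \<in> M" using lM unfolding right_ideal_def by blast
      ultimately show ?thesis by blast
    qed
  next
    fix a b assume "a \<in> {y. \<exists>m\<in>M. \<exists>r. y = m + x * r}" "b \<in> {y. \<exists>m\<in>M. \<exists>r. y = m + x * r}"
    then obtain m1 r1 m2 r2 where "m1 \<in> M" "m2 \<in> M" "a = m1 + x * r1" "b = m2 + x * r2" by auto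
    thus "a - b \<in> {y. \<exists>m\<in>M. \<exists>r. y = m + x * r}" using lM unfolding right_ideal_def
      by (intro CollectI bexI[of _ "m1 - m2"] exI[of _ "r1 - r2"]) (auto simp: algebra_simps)
  next
    fix s a assume "a \<in> {y. \<exists>m\<in>M. \<exists>r. y = m + x * r}"
    then obtain m1 r1 where "m1 \<in> M" "a = m1 + x * r1" by auto
    thus "a * s \<in> {y. \<exists>m\<in>M. \<exists>r. y = m + x * r}" using lM unfolding right_ideal_def
      by (intro CollectI bexI[of _ "m1 * s"] exI[of _ "r1 * s"]) (auto simp: algebra_simps)
  qed
  moreover have "M \<subseteq> K" unfolding K_def
  proof
    fix y assume "y \<in> M"
    moreover have "y = y + x * 0" by simp
    ultimately show "y \<in> {y. \<exists>m\<in>M. \<exists>r. y = m + x * r}" by blast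
  qed
  moreover have "x \<in> K" unfolding K_def using lM unfolding right_ideal_def
    by (auto intro!: bexI[of _ 0] exI[of _ 1])
  ultimately have "K = UNIV" using M x unfolding maximal_right_ideal_def by blast
  hence "1 \<in> K" by auto
  thus ?thesis unfolding K_def by auto
qed

lemma jac_intro:
  assumes H: "\<forall>r. \<exists>u. u * (1 - r * x) = (1::'a::ring_1)"
  shows "x \<in> jacobson"
  unfolding jacobson_def
proof
  fix M assume "M \<in> {I. maximal_left_ideal (I::'a set)}"
  hence M: "maximal_left_ideal M" by auto
  show "x \<in> M"
  proof (rule ccontr)
    assume "x \<notin> M"
    then obtain m r where m: "m \<in> M" "1 = m + r * x" using maxl_ext[OF M] by blast
    obtain u where u: "u * (1 - r * x) = 1" using H by blast
    have "1 - r * x = m" using m by (simp add: algebra_simps)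
    hence "u * m = 1" using u by simp
    moreover have "left_ideal M" using M unfolding maximal_left_ideal_def by blast
    hence "u * m \<in> M" using m unfolding left_ideal_def by blast
    ultimately show False using maxl_one[OF M] by metis
  qed
qed

lemma jac_unit:
  assumes x: "(x::'a::ring_1) \<in> jacobson"
  shows "\<exists>u. u * (1 - r * x) = 1"
proof (rule ccontr)
  assume N: "\<not> ?thesis"
  define I where "I = {y. \<exists>s. y = s * (1 - r * x)}"
  have "left_ideal I" unfolding left_ideal_def I_def
  proof (intro conjI ballI allI)
    show "(0::'a) \<in> {y. \<exists>s. y = s * (1 - r * x)}" by (auto intro: exI[of _ 0])
  next
    fix a b assume "a \<in> {y. \<exists>s. y = s * (1 - r * x)}" "b \<in> {y. \<exists>s. y = s * (1 - r * x)}"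
    then obtain s1 s2 where "a = s1 * (1 - r * x)" "b = s2 * (1 - r * x)" by auto
    hence "a - b = (s1 - s2) * (1 - r * x)" by (simp only: left_diff_distrib)
    thus "a - b \<in> {y. \<exists>s. y = s * (1 - r * x)}" by blast
  next
    fix t a assume "a \<in> {y. \<exists>s. y = s * (1 - r * x)}"
    then obtain s1 where "a = s1 * (1 - r * x)" by auto
    hence "t * a = (t * s1) * (1 - r * x)" by (simp only: mult.assoc)
    thus "t * a \<in> {y. \<exists>s. y = s * (1 - r * x)}" by blast
  qed
  moreover have "1 \<notin> I" using N unfolding I_def by auto
  ultimately obtain M where M: "I \<subseteq> M" "maximal_left_ideal M" using zorn_left by blast
  have "x \<in> M" using x M unfolding jacobson_def by auto
  hence "r * x \<in> M" using maxl_lid[OF M(2)] unfolding left_ideal_def by auto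
  moreover have "1 - r * x \<in> M" using M unfolding I_def by (auto intro: exI[of _ 1])
  ultimately have "(1 - r * x) - (0 - (r * x)) \<in> M" using maxl_lid[OF M(2)] unfolding left_ideal_def
    by blast
  hence "1 \<in> M" by simp
  thus False using maxl_one[OF M(2)] by simp
qed

lemma jac_rmult:
  assumes x: "(x::'a::ring_1) \<in> jacobson"
  shows "x * s \<in> jacobson"
proof (rule jac_intro, rule allI)
  fix r
  have "s * r * x \<in> jacobson" using jac_lmult[OF x] .
  then obtain w where w: "w * (1 - 1 * (s * r * x)) = 1" using jac_unit by blast
  have "(1 + r * x * w * s) * (1 - r * (x * s)) = 1 - r * x * s + r * x * (w * (1 - s * r * x)) * s"
    by (simp add: algebra_simps)
  also have "\<dots> = 1" using w by simp
  finally show "\<exists>u. u * (1 - r * (x * s)) = 1" by blast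
qed

definition jr :: "'a::ring_1 set" where
  "jr = \<Inter> {I. maximal_right_ideal I}"

lemma jr_unit:
  assumes x: "(x::'a::ring_1) \<in> jr"
  shows "\<exists>u. (1 - x * r) * u = 1"
proof (rule ccontr)
  assume N: "\<not> ?thesis"
  define I where "I = {y. \<exists>s. y = (1 - x * r) * s}"
  have "right_ideal I" unfolding right_ideal_def I_def
  proof (intro conjI ballI allI)
    show "(0::'a) \<in> {y. \<exists>s. y = (1 - x * r) * s}" by (auto intro: exI[of _ 0])
  next
    fix a b assume "a \<in> {y. \<exists>s. y = (1 - x * r) * s}" "b \<in> {y. \<exists>s. y = (1 - x * r) * s}"
    then obtain s1 s2 where "a = (1 - x * r) * s1" "b = (1 - x * r) * s2" by auto
    hence "a - b = (1 - x * r) * (s1 - s2)" by (simp only: right_diff_distrib)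
    thus "a - b \<in> {y. \<exists>s. y = (1 - x * r) * s}" by blast
  next
    fix t a assume "a \<in> {y. \<exists>s. y = (1 - x * r) * s}"
    then obtain s1 where "a = (1 - x * r) * s1" by auto
    hence "a * t = (1 - x * r) * (s1 * t)" by (simp only: mult.assoc)
    thus "a * t \<in> {y. \<exists>s. y = (1 - x * r) * s}" by blast
  qed
  moreover have "1 \<notin> I" using N unfolding I_def by auto
  ultimately obtain M where M: "I \<subseteq> M" "maximal_right_ideal M" using zorn_right by blast
  have "x \<in> M" using x M unfolding jr_def by auto
  hence "x * r \<in> M" using maxr_rid[OF M(2)] unfolding right_ideal_def by auto
  moreover have "1 - x * r \<in> M" using M unfolding I_def by (auto intro: exI[of _ 1])
  ultimately have "(1 - x * r) - (0 - (x * r)) \<in> M" using maxr_rid[OF M(2)] unfolding right_ideal_def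
    by blast
  hence "1 \<in> M" by simp
  thus False using maxr_one[OF M(2)] by simp
qed

lemma jr_rmult: "x \<in> jr \<Longrightarrow> x * r \<in> jr"
  unfolding jr_def maximal_right_ideal_def right_ideal_def by auto

lemma jr_sub:
  assumes x: "(x::'a::ring_1) \<in> jr"
  shows "x \<in> jacobson"
proof (rule jac_intro, rule allI)
  fix r
  obtain w where w: "(1 - x * r) * w = 1" using jr_unit[OF x] by blast
  have "x * (- (r * w)) \<in> jr" using jr_rmult[OF x] .
  then obtain w' where w': "(1 - x * (- (r * w)) * 1) * w' = 1" using jr_unit by blast
  have ww: "w = 1 - x * (- (r * w)) * 1" using w by (simp add: algebra_simps)
  hence "w * w' = 1" using w' by simp
  have "1 - x * r = (1 - x * r) * (w * w')" using \<open>w * w' = 1\<close> by simp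
  also have "\<dots> = w'" using w by (simp add: mult.assoc[symmetric])
  finally have wl: "w * (1 - x * r) = 1" using \<open>w * w' = 1\<close> by simp
  have "(1 + r * w * x) * (1 - r * x) = 1 - r * x + r * (w * (1 - x * r)) * x"
    by (simp add: algebra_simps)
  also have "\<dots> = 1" using wl by simp
  finally show "\<exists>u. u * (1 - r * x) = 1" by blast
qed


lemma lid_add: "left_ideal M \<Longrightarrow> x \<in> M \<Longrightarrow> y \<in> M \<Longrightarrow> x + y \<in> M"
  unfolding left_ideal_def by (metis diff_0 diff_minus_eq_add)
lemma rid_add: "right_ideal M \<Longrightarrow> x \<in> M \<Longrightarrow> y \<in> M \<Longrightarrow> x + y \<in> M"
  unfolding right_ideal_def by (metis diff_0 diff_minus_eq_add)

lemma maxl_prime: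
  assumes M: "maximal_left_ideal M" and R: "right_ideal M" and xy: "(x::'a::ring_1) * y \<in> M"
  shows "x \<in> M \<or> y \<in> M"
proof (cases "x \<in> M")
  case True thus ?thesis by blast
next
  case False
  then obtain m r where m: "m \<in> M" "1 = m + r * x" using maxl_ext[OF M] by blast
  have "y = (m + r * x) * y" using m(2)[symmetric] by simp
  hence e: "y = m * y + r * (x * y)" by (simp add: algebra_simps)
  have "m * y \<in> M" using R m unfolding right_ideal_def by blast
  moreover have "r * (x * y) \<in> M" using maxl_lid[OF M] xy unfolding left_ideal_def by blast
  ultimately have "m * y + r * (x * y) \<in> M" using lid_add[OF maxl_lid[OF M]] by blast
  moreover have "(y \<in> M) = (m * y + r * (x * y) \<in> M)" using e by (rule arg_cong[where f="\<lambda>u. u \<in> M"])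
  ultimately show ?thesis by blast
qed

lemma maxr_prime:
  assumes M: "maximal_right_ideal M" and L: "left_ideal M" and xy: "(x::'a::ring_1) * y \<in> M"
  shows "x \<in> M \<or> y \<in> M"
proof (rule disjCI)
  assume "\<not> (y \<in> M)"
  then obtain m r where m: "m \<in> M" "1 = m + y * r" using maxr_ext[OF M] by blast
  have "x = x * (m + y * r)" using m(2)[symmetric] by simp
  hence e: "x = x * m + (x * y) * r" by (simp add: algebra_simps)
  have "x * m \<in> M" using L m unfolding left_ideal_def by blast
  moreover have "(x * y) * r \<in> M" using maxr_rid[OF M] xy unfolding right_ideal_def by blast
  ultimately have "x * m + (x * y) * r \<in> M" using rid_add[OF maxr_rid[OF M]] by blast
  moreover have "(x \<in> M) = (x * m + (x * y) * r \<in> M)" using e by (rule arg_cong[where f="\<lambda>u. u \<in> M"])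
  ultimately show "x \<in> M" by blast
qed

lemma maxl_pow:
  assumes M: "maximal_left_ideal M" and R: "right_ideal M"
  shows "(x::'a::ring_1) ^ n \<in> M \<Longrightarrow> x \<in> M"
proof (induction n)
  case 0 then show ?case using maxl_one[OF M] by simp
next
  case (Suc n) then show ?case using maxl_prime[OF M R, of x "x ^ n"] by auto
qed

lemma maxr_pow:
  assumes M: "maximal_right_ideal M" and L: "left_ideal M"
  shows "(x::'a::ring_1) ^ n \<in> M \<Longrightarrow> x \<in> M"
proof (induction n)
  case 0 then show ?case using maxr_one[OF M] by simp
next
  case (Suc n) then show ?case using maxr_prime[OF M L, of x "x ^ n"] by auto
qed

lemma case_lqd:
  assumes "left_quasi_duo TYPE('a::ring_1)"
  shows "NJ_symmetric TYPE('a)"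
  unfolding NJ_symmetric_def
proof (intro allI impI)
  fix a b c :: 'a assume "nilpotent (a * b * c)"
  then obtain n where n: "(a * b * c) ^ n = 0" unfolding nilpotent_def by blast
  show "b * a * c \<in> jacobson" unfolding jacobson_def
  proof
    fix M assume "M \<in> {I. maximal_left_ideal (I::'a set)}"
    hence M: "maximal_left_ideal M" by simp
    have R: "right_ideal M" using assms M unfolding left_quasi_duo_def by blast
    have L: "left_ideal M" using maxl_lid[OF M] .
    have "(a * b * c) ^ n \<in> M" using n L unfolding left_ideal_def by simp
    hence "a * (b * c) \<in> M" using maxl_pow[OF M R] by (simp add: mult.assoc)
    hence "a \<in> M \<or> b \<in> M \<or> c \<in> M" using maxl_prime[OF M R] by blast
    thus "b * a * c \<in> M"
    proof (elim disjE)
      assume "a \<in> M" thus ?thesis using L R unfolding left_ideal_def right_ideal_def by blast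
    next
      assume "b \<in> M" thus ?thesis using L R unfolding left_ideal_def right_ideal_def by blast
    next
      assume "c \<in> M" thus ?thesis using L R unfolding left_ideal_def right_ideal_def by blast
    qed
  qed
qed

lemma case_rqd:
  assumes "right_quasi_duo TYPE('a::ring_1)"
  shows "NJ_symmetric TYPE('a)"
  unfolding NJ_symmetric_def
proof (intro allI impI)
  fix a b c :: 'a assume "nilpotent (a * b * c)"
  then obtain n where n: "(a * b * c) ^ n = 0" unfolding nilpotent_def by blast
  have "b * a * c \<in> jr" unfolding jr_def
  proof
    fix M assume "M \<in> {I. maximal_right_ideal (I::'a set)}"
    hence M: "maximal_right_ideal M" by simp
    have L: "left_ideal M" using assms M unfolding right_quasi_duo_def by blast
    have R: "right_ideal M" using maxr_rid[OF M] .
    have "(a * b * c) ^ n \<in> M" using n L unfolding left_ideal_def by simp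
    hence "a * (b * c) \<in> M" using maxr_pow[OF M L] by (simp add: mult.assoc)
    hence "a \<in> M \<or> b \<in> M \<or> c \<in> M" using maxr_prime[OF M L] by blast
    thus "b * a * c \<in> M"
    proof (elim disjE)
      assume "a \<in> M" thus ?thesis using L R unfolding left_ideal_def right_ideal_def by blast
    next
      assume "b \<in> M" thus ?thesis using L R unfolding left_ideal_def right_ideal_def by blast
    next
      assume "c \<in> M" thus ?thesis using L R unfolding left_ideal_def right_ideal_def by blast
    qed
  qed
  thus "b * a * c \<in> jacobson" using jr_sub by blast
qed

lemma case_bool:
  assumes B: "\<forall>x::'a::ring_1. x * x - x \<in> jacobson"
  shows "NJ_symmetric TYPE('a)"
  unfolding NJ_symmetric_def
proof (intro allI impI)
  have pw: "x ^ Suc n - x \<in> jacobson" for x :: 'a and n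
  proof (induction n)
    case 0 then show ?case using jac_zero by simp
  next
    case (Suc n)
    have "x ^ Suc (Suc n) - x = x * (x ^ Suc n - x) + (x * x - x)" by (simp add: algebra_simps)
    then show ?case using Suc jac_lmult jac_add B by metis
  qed
  have sym: "x * y + y * x \<in> jacobson" for x y :: 'a
  proof -
    have "x * y + y * x = ((x + y) * (x + y) - (x + y)) - (x * x - x) - (y * y - y)"
      by (simp add: algebra_simps)
    thus ?thesis using B jac_diff by metis
  qed
  have two: "x + x \<in> jacobson" for x :: 'a
  proof -
    have "x + x = (x * x + x * x) - (x * x - x) - (x * x - x)" by (simp add: algebra_simps)
    thus ?thesis using sym B jac_diff by metis
  qed
  have cm: "x * y - y * x \<in> jacobson" for x y :: 'a
  proof -
    have "x * y - y * x = (x * y + y * x) - (y * x + y * x)" by (simp add: algebra_simps)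
    thus ?thesis using sym two jac_diff by metis
  qed
  fix a b c :: 'a assume "nilpotent (a * b * c)"
  then obtain n where n: "(a * b * c) ^ n = 0" unfolding nilpotent_def by blast
  have "n \<noteq> 0" using n by (cases n) auto
  then obtain k where k: "n = Suc k" by (cases n) auto
  have "0 - a * b * c \<in> jacobson" using pw[of "a * b * c" k] n k by simp
  hence abc: "a * b * c \<in> jacobson" using jac_uminus by fastforce
  have "(b * a - a * b) * c \<in> jacobson" using cm jac_rmult by blast
  moreover have "b * a * c = (b * a - a * b) * c + a * b * c" by (simp add: algebra_simps)
  ultimately show "b * a * c \<in> jacobson" using abc jac_add by metis
qed

lemma case_jclean:
  assumes "J_clean TYPE('a::ring_1)"
  shows "NJ_symmetric TYPE('a)"
proof (rule case_bool, rule allI)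
  fix x :: 'a
  obtain e j where ej: "e * e = e" "j \<in> jacobson" "x = e + j" using assms unfolding J_clean_def by blast
  have "x * x - x = e * j + j * e + j * j - j" using ej by (simp add: algebra_simps)
  thus "x * x - x \<in> jacobson" using ej jac_lmult jac_rmult jac_add jac_diff by metis
qed

lemma case_jqp:
  assumes "J_quasipolar TYPE('a::ring_1)"
  shows "NJ_symmetric TYPE('a)"
proof (rule case_bool, rule allI)
  fix x :: 'a
  obtain f where f: "f * f = f" "- x + f \<in> jacobson" using assms unfolding J_quasipolar_def by blast
  define j where "j = - x + f"
  have "x * x - x = j * j - j * f - f * j + j" using f unfolding j_def by (simp add: algebra_simps)
  thus "x * x - x \<in> jacobson" using f(2) unfolding j_def[symmetric] using jac_lmult jac_rmult jac_add jac_diff by metis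
qed


lemma pow_swap: "((q::'a::ring_1) * p) ^ Suc n = q * (p * q) ^ n * p"
proof (induction n)
  case 0 then show ?case by simp
next
  case (Suc n)
  have "(q * p) ^ Suc (Suc n) = (q * p) * (q * p) ^ Suc n" by simp
  also have "\<dots> = q * (p * (q * (p * q) ^ n * p))" using Suc by (simp add: mult.assoc)
  also have "\<dots> = q * ((p * q) * (p * q) ^ n) * p" by (simp add: mult.assoc)
  finally show ?case by simp
qed

lemma nil_swap: "nilpotent ((p::'a::ring_1) * q) \<Longrightarrow> nilpotent (q * p)"
  unfolding nilpotent_def using pow_swap by (metis mult_zero_left mult_zero_right)

lemma nil_sq: "nilpotent ((y::'a::ring_1) * y) \<Longrightarrow> nilpotent y"
  unfolding nilpotent_def by (metis power2_eq_square power_mult)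

lemma geo: "(\<Sum>i<n. (z::'a::ring_1) ^ i) * (1 - z) = 1 - z ^ n"
proof (induction n)
  case 0 then show ?case by simp
next
  case (Suc n)
  have "(\<Sum>i<Suc n. z ^ i) * (1 - z) = (\<Sum>i<n. z ^ i) * (1 - z) + z ^ n * (1 - z)"
    by (simp add: distrib_right)
  also have "\<dots> = 1 - z ^ Suc n" using Suc by (simp add: algebra_simps power_Suc2 power_commutes)
  finally show ?case .
qed

lemma nil_unit: "nilpotent (z::'a::ring_1) \<Longrightarrow> \<exists>u. u * (1 - z) = 1"
  unfolding nilpotent_def using geo by (metis diff_zero)

lemma case_gws:
  assumes G: "GWS TYPE('a::ring_1)" and I2: "\<forall>x::'a. nilpotent x \<longrightarrow> x ^ 2 = 0"
  shows "NJ_symmetric TYPE('a)"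
proof -
  have G': "a * b * c = 0 \<Longrightarrow> nilpotent (b * a * c)" for a b c :: 'a
    using G unfolding GWS_def by blast
  have rm: "nilpotent (x * r)" if "nilpotent x" for x r :: 'a
  proof -
    have "x * x = 0" using I2 that by (simp add: power2_eq_square)
    hence "x * (x * r) * r = 0" by (simp add: mult.assoc[symmetric])
    hence "nilpotent (x * r * x * r)" using G' by blast
    hence "nilpotent ((x * r) * (x * r))" by (simp add: mult.assoc)
    thus ?thesis using nil_sq by blast
  qed
  have lm: "nilpotent (r * x)" if "nilpotent x" for x r :: 'a
    using rm[OF that] nil_swap by blast
  have ins: "nilpotent (p * r * q)" if "nilpotent (p * q)" for p q r :: 'a
  proof -
    have "nilpotent (q * p)" using nil_swap that by blast
    hence "nilpotent ((p * r) * (q * p) * (r * q))" using rm lm by blast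
    hence "nilpotent ((p * r * q) * (p * r * q))" by (simp add: mult.assoc)
    thus ?thesis using nil_sq by blast
  qed
  show ?thesis unfolding NJ_symmetric_def
  proof (intro allI impI)
    fix a b d :: 'a assume "nilpotent (a * b * d)"
    hence "nilpotent (a * (b * d))" by (simp add: mult.assoc)
    hence "nilpotent (a * d * (b * d))" using ins by blast
    hence "nilpotent ((a * d * b) * d)" by (simp add: mult.assoc)
    hence "nilpotent ((a * d * b) * a * d)" using ins by blast
    hence "nilpotent ((a * d * b) * a * d * b)" using rm by blast
    hence "nilpotent ((a * d * b) * (a * d * b))" by (simp add: mult.assoc)
    hence "nilpotent (a * d * b)" using nil_sq by blast
    hence "nilpotent (a * (d * b))" by (simp add: mult.assoc)
    hence "nilpotent ((d * b) * a)" using nil_swap by blast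
    hence "nilpotent (d * (b * a))" by (simp add: mult.assoc)
    hence bad: "nilpotent (b * a * d)" using nil_swap by blast
    show "b * a * d \<in> jacobson"
    proof (rule jac_intro, rule allI)
      fix r show "\<exists>u. u * (1 - r * (b * a * d)) = 1" using nil_unit lm[OF bad] by blast
    qed
  qed
qed

theorem theorem2p4:
  assumes "(left_quasi_duo TYPE('a::ring_1) \<or> right_quasi_duo TYPE('a))
         \<or> (abelian_ring TYPE('a) \<and> J_clean TYPE('a))
         \<or> (abelian_ring TYPE('a) \<and> J_quasipolar TYPE('a))
         \<or> (GWS TYPE('a) \<and> (\<forall>x::'a. nilpotent x \<longrightarrow> x ^ 2 = 0))"
  shows "NJ_symmetric TYPE('a)"
  using assms case_lqd case_rqd case_jclean case_jqp case_gws by blast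

end
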